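(* Let $p,q\ge0$ and $a_0,\dots,a_p,c_1,\dots,c_q\in\mathbb C$. Then there exist $n$ and $\mathbf s\in\mathbb C^n$ such that each $Z_{2i}$ ($i\ge0$) acts on the $YQ(1)$-module $V(\mathbf s)$ by a scalar $\chi_{2i}$, and $\sum_{i\ge0}\chi_{2i}u^{-2i-1}=\frac{a_0u^{-1}+\dots+a_pu^{-2p-1}}{1+c_1u^{-2}+\dots+c_qu^{-2q}}$ as formal power series in $u^{-1}$.
   Context: $YQ(1)$ is the unital superalgebra generated by $T_{i,j}^{(m)}$, $m\ge1$, $i,j\in\{\pm1\}$, of parity $p(i)+p(j)$ ($p(1)=0,p(-1)=1$), with $T_{i,j}(u)=\delta_{ij}+\sum_m T^{(m)}_{i,j}u^{-m}$ and defining relations $(u^2-v^2)[T_{i,j}(u),T_{k,l}(v)](-1)^{p(i)p(k)+p(i)p(l)+p(k)p(l)}=(u+v)(T_{k,j}(u)T_{i,l}(v)-T_{k,j}(v)T_{i,l}(u))-(u-v)(T_{-k,j}(u)T_{-i,l}(v)-T_{k,-j}(v)T_{i,-l}(u))(-1)^{p(k)+p(l)}$ and $T_{i,j}(-u)=T_{-i,-j}(u)$ (brackets are supercommutators). Set $\eta_i=(-\tfrac12)^i(\operatorname{ad}T^{(2)}_{1,1})^i(T^{(1)}_{1,-1})$ and $Z_{2i}=\tfrac12[\eta_0,\eta_{2i}]$; the $Z_{2i}$ are central. Let $U(\mathfrak h_n)$ be the superalgebra generated by odd $\xi_1,\dots,\xi_n$ with $\xi_i\xi_j+\xi_j\xi_i=0$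 ($i\ne j$), $x_i=\xi_i^2$. There is a surjective homomorphism $\varphi_n:YQ(1)\to W^n\subset U(\mathfrak h_n)$ onto the principal finite $W$-algebra of $Q(n)$, $\varphi_n(T^{(k)}_{1,1})=(-1)^k[\Sigma_k]_{even}$, $\varphi_n(T^{(k)}_{-1,1})=(-1)^k[\Sigma_k]_{odd}$, $\Sigma_k=\sum_{i_1<\dots<i_k}\prod_{j=1}^k(x_{i_j}+(-1)^{k-j}\xi_{i_j})$ ($0$ for $k>n$). $V(\mathbf s)$, $\mathbf s\in\mathbb C^n$, is a simple graded $U(\mathfrak h_n)$-module with $x_i$ acting by $s_i$, made into a $YQ(1)$-module via $\varphi_n$. *)

theory Defs
  imports Complex_Main "HOL-Computational_Algebra.Formal_Power_Series"
begin

text \<open>A graded module over U(h_n) (generated by odd xi_1..xi_n, pairwise anticommuting,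
 x_i = xi_i^2) on a carrier subspace M = M0 (+) M1 of a complex vector space (type 'v with
 scalar multiplication sc).  Xi i is the action of xi_i (indices 1..n).  x_i acts by s i.\<close>

definition simple_graded_hmod ::
  "(complex \<Rightarrow> 'v::ab_group_add \<Rightarrow> 'v) \<Rightarrow> 'v set \<Rightarrow> 'v set \<Rightarrow> 'v set \<Rightarrow> nat
    \<Rightarrow> (nat \<Rightarrow> 'v \<Rightarrow> 'v) \<Rightarrow> (nat \<Rightarrow> complex) \<Rightarrow> bool" where
  "simple_graded_hmod sc M M0 M1 n Xi s \<longleftrightarrow>
     vector_space sc \<and> module.subspace sc M0 \<and> module.subspace sc M1 \<and>
     M0 \<inter> M1 = {0} \<and> M = {x + y | x y. x \<in> M0 \<and> y \<in> M1} \<and>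
     (\<forall>i\<in>{1..n}. (\<forall>x\<in>M. \<forall>y\<in>M. Xi i (x + y) = Xi i x + Xi i y) \<and>
                   (\<forall>c. \<forall>x\<in>M. Xi i (sc c x) = sc c (Xi i x)) \<and>
                   Xi i ` M0 \<subseteq> M1 \<and> Xi i ` M1 \<subseteq> M0) \<and>
     (\<forall>i\<in>{1..n}. \<forall>j\<in>{1..n}. i \<noteq> j \<longrightarrow> (\<forall>v\<in>M. Xi i (Xi j v) + Xi j (Xi i v) = 0)) \<and>
     (\<forall>i\<in>{1..n}. \<forall>v\<in>M. Xi i (Xi i v) = sc (s i) v) \<and>
     M \<noteq> {0} \<and>
     (\<forall>W. module.subspace sc W \<and> W \<subseteq> M \<and>
          W = {x + y | x y. x \<in> W \<inter> M0 \<and> y \<in> W \<inter> M1} \<and>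
          (\<forall>i\<in>{1..n}. Xi i ` W \<subseteq> W)
          \<longrightarrow> W = {0} \<or> W = M)"

text \<open>Action of the even part (ev = True) resp. odd part (ev = False) of
 Sigma_k = sum_{i_1<...<i_k} prod_{j=1}^k (x_{i_j} + (-1)^(k-j) xi_{i_j}):
 expand each product choosing the xi-term at the positions in J; the even part
 consists of the terms with card J even.  x_i acts as Xi i o Xi i.\<close>

definition sigma_part ::
  "(complex \<Rightarrow> 'v::ab_group_add \<Rightarrow> 'v) \<Rightarrow> nat \<Rightarrow> (nat \<Rightarrow> 'v \<Rightarrow> 'v) \<Rightarrow> nat \<Rightarrow> bool \<Rightarrow> 'v \<Rightarrow> 'v" where
  "sigma_part sc n Xi k ev = (\<lambda>v.
     \<Sum>I\<in>{I. I \<subseteq> {1..n} \<and> card I = k}.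
       \<Sum>J\<in>{J. J \<subseteq> {1..k} \<and> even (card J) = ev}.
         (let ix = sorted_list_of_set I in
            foldr (\<circ>)
              (map (\<lambda>j. if j \<in> J then (\<lambda>w. sc ((-1) ^ (k - j)) (Xi (ix ! (j - 1)) w))
                        else Xi (ix ! (j - 1)) \<circ> Xi (ix ! (j - 1))) [1..<k+1]) id) v)"

text \<open>Actions via phi_n of T^(k)_{1,1}, T^(k)_{-1,1}, and T^(k)_{1,-1};
 the latter uses T_{i,j}(-u) = T_{-i,-j}(u), i.e. T^(k)_{1,-1} = (-1)^k T^(k)_{-1,1}.\<close>

definition phiT11 where
  "phiT11 sc n Xi k = (\<lambda>v. sc ((-1) ^ k) (sigma_part sc n Xi k True v))"

definition phiTm11 where
  "phiTm11 sc n Xi k = (\<lambda>v. sc ((-1) ^ k) (sigma_part sc n Xi k False v))"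

definition phiT1m1 where
  "phiT1m1 sc n Xi k = (\<lambda>v. sc ((-1) ^ k) (phiTm11 sc n Xi k v))"

text \<open>eta_i = (-1/2)^i (ad T^(2)_{11})^i (T^(1)_{1,-1}); T^(2)_{11} is even, so ad is the
 ordinary commutator.\<close>

definition eta_op where
  "eta_op sc n Xi i = (\<lambda>v. sc ((-1/2) ^ i)
     (((\<lambda>Y w. phiT11 sc n Xi 2 (Y w) - Y (phiT11 sc n Xi 2 w)) ^^ i) (phiT1m1 sc n Xi 1) v))"

text \<open>Z_{2i} = 1/2 [eta_0, eta_{2i}], supercommutator of two odd elements (anticommutator).
 Zop ... i is the action of Z_{2i}.\<close>

definition Zop where
  "Zop sc n Xi i = (\<lambda>v. sc (1/2)
     (eta_op sc n Xi 0 (eta_op sc n Xi (2*i) v) + eta_op sc n Xi (2*i) (eta_op sc n Xi 0 v)))"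

end

theory Submission
  imports Defs "HOL-Computational_Algebra.Polynomial_FPS" "HOL-Computational_Algebra.Fundamental_Theorem_Algebra"
begin

unbundle fps_syntax



definition Pairs :: "nat \<Rightarrow> (nat \<times> nat) set" where
  "Pairs n = {(a,c). 1 \<le> a \<and> a < c \<and> c \<le> n}"

lemma card2_set: "{I. I \<subseteq> {1..n} \<and> card I = 2} = (\<lambda>(a,c). {a,c}) ` Pairs n"
proof (rule set_eqI, rule iffI)
  fix I assume "I \<in> {I. I \<subseteq> {1..n} \<and> card I = 2}"
  then obtain x y where xy: "I = {x,y}" "x \<noteq> y" "I \<subseteq> {1..n}" by (auto simp: card_2_iff)
  show "I \<in> (\<lambda>(a,c). {a,c}) ` Pairs n"
  proof (cases "x < y")
    case True 
    then have "(x,y) \<in> Pairs n" using xy by (auto simp: Pairs_def)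
    then show ?thesis using xy by force
  next
    case False 
    then have "(y,x) \<in> Pairs n" using xy by (auto simp: Pairs_def)
    then show ?thesis using xy by force
  qed
next
  fix I assume "I \<in> (\<lambda>(a,c). {a,c}) ` Pairs n"
  then obtain a c where "I = {a,c}" "1 \<le> a" "a < c" "c \<le> n" by (auto simp: Pairs_def)
  then show "I \<in> {I. I \<subseteq> {1..n} \<and> card I = 2}" by auto
qed

lemma inj_pairs: "inj_on (\<lambda>(a,c). {a,c}) (Pairs n)"
  unfolding inj_on_def Pairs_def by (auto simp: doubleton_eq_iff)

lemma finite_pairs[simp]: "finite (Pairs n)"
proof -
  have "Pairs n \<subseteq> {1..n} \<times> {1..n}" by (auto simp: Pairs_def)
  then show ?thesis by (rule finite_subset) simp
qed

lemma J2: "{J. J \<subseteq> {1..2::nat} \<and> even (card J) = True} = {{}, {1,2}}"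
proof -
  have e: "{1..2::nat} = {1,2}" by (auto simp: numeral_2_eq_2)
  have p: "Pow {1,2::nat} = {{},{1},{2},{1,2}}" by (simp add: Pow_insert insert_commute)
  show ?thesis
  proof (rule set_eqI, rule iffI)
    fix J assume "J \<in> {J. J \<subseteq> {1..2::nat} \<and> even (card J) = True}"
    then have "J \<in> Pow {1,2}" "even (card J)" unfolding e by auto
    then have "J \<in> {{},{1},{2},{1,2}}" "even (card J)" unfolding p by auto
    then show "J \<in> {{}, {1,2}}" by (simp only: insert_iff empty_iff; elim disjE; simp)
  next
    fix J assume "J \<in> {{}, {1::nat,2}}"
    then show "J \<in> {J. J \<subseteq> {1..2::nat} \<and> even (card J) = True}" unfolding e by auto
  qed
qed

lemma J1: "{J. J \<subseteq> {1..1::nat} \<and> even (card J) = False} = {{1}}"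
proof (rule set_eqI, rule iffI)
  fix J assume "J \<in> {J. J \<subseteq> {1..1::nat} \<and> even (card J) = False}"
  then have "J \<subseteq> {1}" "odd (card J)" by auto
  then show "J \<in> {{1}}" by (cases "J = {}") (auto simp: subset_singleton_iff)
qed auto

lemma card1_set: "{I. I \<subseteq> {1..n} \<and> card I = 1} = (\<lambda>i. {i}) ` {1..n}"
proof (rule set_eqI, rule iffI)
  fix I assume "I \<in> {I. I \<subseteq> {1..n} \<and> card I = 1}"
  then obtain i where "I = {i}" "I \<subseteq> {1..n}" by (auto simp: card_1_singleton_iff)
  then show "I \<in> (\<lambda>i. {i}) ` {1..n}" by simp
qed auto




definition Lmap :: "nat \<Rightarrow> (nat \<Rightarrow> complex) \<Rightarrow> (nat \<Rightarrow> complex) \<Rightarrow> (nat \<Rightarrow> complex)" where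
  "Lmap n s b = (\<lambda>k. (\<Sum>c\<in>{k<..n}. s c * b c) - (\<Sum>a\<in>{1..<k}. s a * b a))"

locale hm =
  fixes sc :: "complex \<Rightarrow> 'v::ab_group_add \<Rightarrow> 'v" and M M0 M1 n Xi s
  assumes H: "simple_graded_hmod sc M M0 M1 n Xi s"
begin

sublocale vector_space sc using H unfolding simple_graded_hmod_def by auto

lemma sub0: "subspace M0" and sub1: "subspace M1" and Mdef: "M = {x + y | x y. x \<in> M0 \<and> y \<in> M1}"
  using H unfolding simple_graded_hmod_def by auto

lemma M0M: "x \<in> M0 \<Longrightarrow> x \<in> M"
  using sub1 unfolding Mdef subspace_def by force
lemma M1M: "x \<in> M1 \<Longrightarrow> x \<in> M"
  using sub0 unfolding Mdef subspace_def by force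

lemma M_zero[simp]: "0 \<in> M" using M0M sub0 subspace_def by blast

lemma M_add[simp]: "x \<in> M \<Longrightarrow> y \<in> M \<Longrightarrow> x + y \<in> M"
proof -
  assume "x \<in> M" "y \<in> M"
  then obtain x0 x1 y0 y1 where "x = x0 + x1" "y = y0 + y1" "x0 \<in> M0" "y0 \<in> M0" "x1 \<in> M1" "y1 \<in> M1"
    unfolding Mdef by auto
  moreover have "x + y = (x0 + y0) + (x1 + y1)" using calculation by (simp add: algebra_simps)
  ultimately show ?thesis using sub0 sub1 unfolding Mdef subspace_def by blast
qed

lemma M_scale[simp]: "x \<in> M \<Longrightarrow> sc c x \<in> M"
proof -
  assume "x \<in> M"
  then obtain x0 x1 where "x = x0 + x1" "x0 \<in> M0" "x1 \<in> M1"
    unfolding Mdef by auto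
  moreover have "sc c x = sc c x0 + sc c x1" using calculation by (simp add: algebra_simps)
  ultimately show ?thesis using sub0 sub1 unfolding Mdef subspace_def by blast
qed

lemma M_neg[simp]: "x \<in> M \<Longrightarrow> - x \<in> M"
  using M_scale[of x "-1"] by simp

lemma M_diff[simp]: "x \<in> M \<Longrightarrow> y \<in> M \<Longrightarrow> x - y \<in> M"
  using M_add[of x "-y"] by simp

lemma M_sum[simp]: "(\<And>i. i \<in> A \<Longrightarrow> f i \<in> M) \<Longrightarrow> sum f A \<in> M"
  by (induct A rule: infinite_finite_induct) auto

lemma Xi_props: "\<forall>i\<in>{1..n}. (\<forall>x\<in>M. \<forall>y\<in>M. Xi i (x + y) = Xi i x + Xi i y) \<and>
                   (\<forall>c. \<forall>x\<in>M. Xi i (sc c x) = sc c (Xi i x)) \<and>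
                   Xi i ` M0 \<subseteq> M1 \<and> Xi i ` M1 \<subseteq> M0"
  using H unfolding simple_graded_hmod_def by (elim conjE) assumption

lemma Xi_lin: "i \<in> {1..n} \<Longrightarrow> x \<in> M \<Longrightarrow> y \<in> M \<Longrightarrow> Xi i (x + y) = Xi i x + Xi i y"
  "i \<in> {1..n} \<Longrightarrow> x \<in> M \<Longrightarrow> Xi i (sc c x) = sc c (Xi i x)"
  "i \<in> {1..n} \<Longrightarrow> Xi i ` M0 \<subseteq> M1" "i \<in> {1..n} \<Longrightarrow> Xi i ` M1 \<subseteq> M0"
  using Xi_props by simp_all

lemma Xi_M[simp]: "i \<in> {1..n} \<Longrightarrow> x \<in> M \<Longrightarrow> Xi i x \<in> M"
proof -
  assume i: "i \<in> {1..n}" and "x \<in> M"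
  then obtain x0 x1 where "x = x0 + x1" "x0 \<in> M0" "x1 \<in> M1"
    unfolding Mdef by auto
  moreover have "Xi i x0 \<in> M1" "Xi i x1 \<in> M0" using Xi_lin(3,4)[OF i] calculation by auto
  ultimately show ?thesis using Xi_lin(1)[OF i, of x0 x1] M0M M1M by simp
qed

lemma Xi_zero[simp]: "i \<in> {1..n} \<Longrightarrow> Xi i 0 = 0"
  using Xi_lin(2)[of i 0 0] by simp

lemma Xi_add: "i \<in> {1..n} \<Longrightarrow> x \<in> M \<Longrightarrow> y \<in> M \<Longrightarrow> Xi i (x + y) = Xi i x + Xi i y"
  by (rule Xi_lin)
lemma Xi_scale: "i \<in> {1..n} \<Longrightarrow> x \<in> M \<Longrightarrow> Xi i (sc c x) = sc c (Xi i x)"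
  by (rule Xi_lin)
lemma Xi_neg: "i \<in> {1..n} \<Longrightarrow> x \<in> M \<Longrightarrow> Xi i (- x) = - Xi i x"
  using Xi_scale[of i x "-1"] by simp
lemma Xi_diff: "i \<in> {1..n} \<Longrightarrow> x \<in> M \<Longrightarrow> y \<in> M \<Longrightarrow> Xi i (x - y) = Xi i x - Xi i y"
  using Xi_add[of i x "-y"] Xi_neg by simp
lemma Xi_sum: "i \<in> {1..n} \<Longrightarrow> (\<And>j. j \<in> A \<Longrightarrow> f j \<in> M) \<Longrightarrow> Xi i (sum f A) = (\<Sum>j\<in>A. Xi i (f j))"
  by (induct A rule: infinite_finite_induct) (auto simp: Xi_add)

lemma Xi_sq: "i \<in> {1..n} \<Longrightarrow> v \<in> M \<Longrightarrow> Xi i (Xi i v) = sc (s i) v"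
proof -
  assume a: "i \<in> {1..n}" "v \<in> M"
  have "\<forall>i\<in>{1..n}. \<forall>v\<in>M. Xi i (Xi i v) = sc (s i) v"
    using H unfolding simple_graded_hmod_def by (elim conjE) assumption
  then show ?thesis using a by simp
qed
lemma Xi_anti: "i \<in> {1..n} \<Longrightarrow> j \<in> {1..n} \<Longrightarrow> i \<noteq> j \<Longrightarrow> v \<in> M \<Longrightarrow> Xi i (Xi j v) + Xi j (Xi i v) = 0"
proof -
  assume a: "i \<in> {1..n}" "j \<in> {1..n}" "i \<noteq> j" "v \<in> M"
  have "\<forall>i\<in>{1..n}. \<forall>j\<in>{1..n}. i \<noteq> j \<longrightarrow> (\<forall>v\<in>M. Xi i (Xi j v) + Xi j (Xi i v) = 0)"
    using H unfolding simple_graded_hmod_def by (elim conjE) assumption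
  then show ?thesis using a by simp
qed

definition X :: "(nat \<Rightarrow> complex) \<Rightarrow> 'v \<Rightarrow> 'v" where
  "X b v = (\<Sum>k\<in>{1..n}. sc (b k) (Xi k v))"

lemma X_M[simp]: "v \<in> M \<Longrightarrow> X b v \<in> M"
  unfolding X_def by (intro M_sum) auto

lemma X_zero[simp]: "X b 0 = 0"
  unfolding X_def by (intro sum.neutral) auto

lemma X_add: "x \<in> M \<Longrightarrow> y \<in> M \<Longrightarrow> X b (x + y) = X b x + X b y"
  unfolding X_def by (simp add: Xi_add scale_right_distrib sum.distrib)
lemma X_scale: "x \<in> M \<Longrightarrow> X b (sc c x) = sc c (X b x)"
  unfolding X_def by (simp add: Xi_scale scale_sum_right mult.commute)
lemma X_neg: "x \<in> M \<Longrightarrow> X b (- x) = - X b x"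
  using X_scale[where c="-1"] by simp
lemma X_diff: "x \<in> M \<Longrightarrow> y \<in> M \<Longrightarrow> X b (x - y) = X b x - X b y"
  using X_add[of x "-y"] X_neg by simp
lemma X_sum: "(\<And>j. j \<in> A \<Longrightarrow> f j \<in> M) \<Longrightarrow> X b (sum f A) = (\<Sum>j\<in>A. X b (f j))"
  by (induct A rule: infinite_finite_induct) (auto simp: X_add)
lemma X_cscale: "X (\<lambda>k. c * b k) v = sc c (X b v)"
  unfolding X_def by (simp add: scale_sum_right)

lemma anti1:
  assumes a: "a \<in> {1..n}" and v: "v \<in> M"
  shows "Xi a (X b v) + X b (Xi a v) = sc (2 * b a * s a) v"
proof -
  have "Xi a (X b v) + X b (Xi a v) = (\<Sum>k\<in>{1..n}. sc (b k) (Xi a (Xi k v) + Xi k (Xi a v)))"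
    unfolding X_def using a v by (simp add: Xi_sum Xi_scale sum.distrib scale_right_distrib del: atLeastAtMost_iff)
  also have "\<dots> = (\<Sum>k\<in>{1..n}. if k = a then sc (2 * b a * s a) v else 0)"
    apply (rule sum.cong[OF refl])
    using a v Xi_anti Xi_sq by (auto simp: scale_left_distrib[symmetric])
  also have "\<dots> = sc (2 * b a * s a) v" using a by simp
  finally show ?thesis .
qed

lemma anti2:
  assumes v: "v \<in> M"
  shows "X b (X b' v) + X b' (X b v) = sc (2 * (\<Sum>k\<in>{1..n}. b k * b' k * s k)) v"
proof -
  have "X b (X b' v) + X b' (X b v) = (\<Sum>k\<in>{1..n}. sc (b k) (Xi k (X b' v) + X b' (Xi k v)))"
    unfolding X_def[of b] using v by (simp add: X_sum X_scale sum.distrib scale_right_distrib del: atLeastAtMost_iff)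
  also have "\<dots> = (\<Sum>k\<in>{1..n}. sc (2 * (b k * b' k * s k)) v)"
    apply (rule sum.cong[OF refl]) using anti1 v by (simp add: mult.commute mult.left_commute)
  also have "\<dots> = sc (2 * (\<Sum>k\<in>{1..n}. b k * b' k * s k)) v"
    by (simp add: scale_sum_left sum_distrib_left)
  finally show ?thesis .
qed

end



context hm begin

lemma T1: assumes v: "v \<in> M" shows "phiT1m1 sc n Xi 1 v = X (\<lambda>_. 1) v"
proof -
  have "sigma_part sc n Xi 1 False v = (\<Sum>i\<in>{1..n}. Xi i v)"
    unfolding sigma_part_def card1_set J1
    by (subst sum.reindex) (auto simp: inj_on_def)
  then show ?thesis unfolding phiT1m1_def phiTm11_def X_def by simp
qed

lemma T2: assumes v: "v \<in> M"
  shows "phiT11 sc n Xi 2 v = (\<Sum>p\<in>Pairs n. sc (s (fst p) * s (snd p)) v - Xi (fst p) (Xi (snd p) v))"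
proof -
  have "sigma_part sc n Xi 2 True v = (\<Sum>p\<in>Pairs n. sc (s (fst p) * s (snd p)) v - Xi (fst p) (Xi (snd p) v))"
    unfolding sigma_part_def card2_set J2
    apply (subst sum.reindex[OF inj_pairs])
    apply (rule sum.cong[OF refl])
    apply (clarsimp simp: Pairs_def)
    apply (simp add: numeral_2_eq_2 upt_rec)
    using v by (simp add: Xi_sq)
  then show ?thesis unfolding phiT11_def by simp
qed


lemma Pairs_Sigma1: "Pairs n = Sigma {1..n} (\<lambda>a. {a<..n})"
  unfolding Pairs_def by auto

lemma Pairs_Sigma2: "Pairs n = (\<lambda>(c,a). (a,c)) ` Sigma {1..n} (\<lambda>c. {1..<c})"
  unfolding Pairs_def by force

lemma pair_comm:
  assumes a: "a \<in> {1..n}" and c: "c \<in> {1..n}" and v: "v \<in> M"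
  shows "(sc (s a * s c) (X b v) - Xi a (Xi c (X b v))) - X b (sc (s a * s c) v - Xi a (Xi c v))
       = sc (2 * b a * s a) (Xi c v) - sc (2 * b c * s c) (Xi a v)"
proof -
  have e1: "X b (Xi a (Xi c v)) = sc (2 * b a * s a) (Xi c v) - Xi a (X b (Xi c v))"
    using anti1[OF a, of "Xi c v" b] c v by (simp add: algebra_simps)
  have e2: "X b (Xi c v) = sc (2 * b c * s c) v - Xi c (X b v)"
    using anti1[OF c v, of b] by (simp add: algebra_simps)
  have e3: "Xi a (X b (Xi c v)) = sc (2 * b c * s c) (Xi a v) - Xi a (Xi c (X b v))"
    unfolding e2 using a c v by (simp add: Xi_diff Xi_scale)
  show ?thesis using v a c
    by (simp add: X_diff X_scale e1 e3 algebra_simps)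
qed

lemma comm:
  assumes v: "v \<in> M"
  shows "phiT11 sc n Xi 2 (X b v) - X b (phiT11 sc n Xi 2 v) = X (\<lambda>k. -2 * Lmap n s b k) v"
proof -
  have mem: "p \<in> Pairs n \<Longrightarrow> fst p \<in> {1..n} \<and> snd p \<in> {1..n}" for p
    by (auto simp: Pairs_def)
  have "phiT11 sc n Xi 2 (X b v) - X b (phiT11 sc n Xi 2 v) =
     (\<Sum>p\<in>Pairs n. (sc (s (fst p) * s (snd p)) (X b v) - Xi (fst p) (Xi (snd p) (X b v)))
        - X b (sc (s (fst p) * s (snd p)) v - Xi (fst p) (Xi (snd p) v)))"
    unfolding T2[OF v] T2[OF X_M[OF v]]
    by (subst X_sum) (use v mem in \<open>simp_all add: sum_subtractf\<close>)
  also have "\<dots> = (\<Sum>p\<in>Pairs n. sc (2 * b (fst p) * s (fst p)) (Xi (snd p) v))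
       - (\<Sum>p\<in>Pairs n. sc (2 * b (snd p) * s (snd p)) (Xi (fst p) v))"
    unfolding sum_subtractf[symmetric]
    by (rule sum.cong[OF refl]) (use mem v pair_comm in auto)
  also have "(\<Sum>p\<in>Pairs n. sc (2 * b (fst p) * s (fst p)) (Xi (snd p) v))
     = (\<Sum>c\<in>{1..n}. \<Sum>a\<in>{1..<c}. sc (2 * b a * s a) (Xi c v))"
    unfolding Pairs_Sigma2
    by (subst sum.reindex) (auto simp: inj_on_def sum.Sigma split_def intro!: sum.cong)
  also have "(\<Sum>p\<in>Pairs n. sc (2 * b (snd p) * s (snd p)) (Xi (fst p) v))
     = (\<Sum>a\<in>{1..n}. \<Sum>c\<in>{a<..n}. sc (2 * b c * s c) (Xi a v))"
    unfolding Pairs_Sigma1 by (auto simp: sum.Sigma split_def)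
  also have "(\<Sum>c\<in>{1..n}. \<Sum>a\<in>{1..<c}. sc (2 * b a * s a) (Xi c v))
     - (\<Sum>a\<in>{1..n}. \<Sum>c\<in>{a<..n}. sc (2 * b c * s c) (Xi a v))
     = X (\<lambda>k. -2 * Lmap n s b k) v"
    unfolding X_def Lmap_def sum_subtractf[symmetric]
  proof (rule sum.cong[OF refl])
    fix k
    have "-2 * ((\<Sum>c\<in>{k<..n}. s c * b c) - (\<Sum>a\<in>{1..<k}. s a * b a))
       = (\<Sum>a\<in>{1..<k}. 2 * b a * s a) - (\<Sum>c\<in>{k<..n}. 2 * b c * s c)"
    proof -
      have h1: "\<And>A. (\<Sum>a\<in>A. 2 * b a * s a) = 2 * (\<Sum>a\<in>A. s a * b a)"
        by (simp add: sum_distrib_left mult_ac)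
      show ?thesis by (simp only: h1, simp add: right_diff_distrib)
    qed
    then show "(\<Sum>a\<in>{1..<k}. sc (2 * b a * s a) (Xi k v)) - (\<Sum>c\<in>{k<..n}. sc (2 * b c * s c) (Xi k v))
      = sc (-2 * ((\<Sum>c\<in>{k<..n}. s c * b c) - (\<Sum>a\<in>{1..<k}. s a * b a))) (Xi k v)"
      by (simp only: scale_left_diff_distrib scale_sum_left)
  qed
  finally show ?thesis .
qed


lemma ad_iter:
  "\<forall>v\<in>M. (((\<lambda>Y w. phiT11 sc n Xi 2 (Y w) - Y (phiT11 sc n Xi 2 w)) ^^ i) (phiT1m1 sc n Xi 1)) v
       = X (((\<lambda>b k. -2 * Lmap n s b k) ^^ i) (\<lambda>_. 1)) v"
proof (induction i)
  case 0 then show ?case using T1 by auto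
next
  case (Suc i)
  show ?case
  proof
    fix v assume v: "v \<in> M"
    have T2M: "phiT11 sc n Xi 2 v \<in> M" unfolding T2[OF v]
      by (intro M_sum M_diff M_scale Xi_M v) (auto simp: Pairs_def)
    show "(((\<lambda>Y w. phiT11 sc n Xi 2 (Y w) - Y (phiT11 sc n Xi 2 w)) ^^ Suc i) (phiT1m1 sc n Xi 1)) v
       = X (((\<lambda>b k. -2 * Lmap n s b k) ^^ Suc i) (\<lambda>_. 1)) v"
      using Suc.IH v T2M by (simp add: comm)
  qed
qed


end

lemma Lmap_scale: "Lmap n s (\<lambda>k. c * b k) = (\<lambda>k. c * Lmap n s b k)"
  unfolding Lmap_def by (simp add: sum_distrib_left right_diff_distrib mult_ac)

lemma D_pow: "((\<lambda>b k. -2 * Lmap n s b k) ^^ i) b0 = (\<lambda>k. (-2) ^ i * (Lmap n s ^^ i) b0 k)"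
  by (induction i) (simp_all add: Lmap_scale mult_ac)

definition chi0 :: "nat \<Rightarrow> (nat \<Rightarrow> complex) \<Rightarrow> nat \<Rightarrow> complex" where
  "chi0 n s i = (\<Sum>k\<in>{1..n}. s k * (Lmap n s ^^ (2*i)) (\<lambda>_. 1) k)"

context hm begin

lemma eta: assumes v: "v \<in> M" shows "eta_op sc n Xi i v = X ((Lmap n s ^^ i) (\<lambda>_. 1)) v"
proof -
  have "eta_op sc n Xi i v = sc ((-1/2)^i) (X (\<lambda>k. (-2) ^ i * (Lmap n s ^^ i) (\<lambda>_. 1) k) v)"
    unfolding eta_op_def using ad_iter[unfolded D_pow, of i] v by simp
  also have "\<dots> = X (\<lambda>k. ((-1/2)^i * (-2) ^ i) * (Lmap n s ^^ i) (\<lambda>_. 1) k) v"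
    by (simp add: X_cscale[symmetric] mult.assoc)
  also have "(-1/2)^i * (-2) ^ i = (1::complex)"
    by (simp add: power_mult_distrib[symmetric])
  finally show ?thesis by simp
qed

lemma Zop_eq: assumes v: "v \<in> M" shows "Zop sc n Xi i v = sc (chi0 n s i) v"
proof -
  have "Zop sc n Xi i v = sc (1/2) (sc (2 * (\<Sum>k\<in>{1..n}. 1 * (Lmap n s ^^ (2*i)) (\<lambda>_. 1) k * s k)) v)"
    unfolding Zop_def using v by (simp add: eta anti2)
  then show ?thesis unfolding chi0_def by (simp add: mult_ac)
qed

end





definition uu :: "(nat \<Rightarrow> complex) \<Rightarrow> nat \<Rightarrow> complex fps" where
  "uu s j = fps_const (s j) * fps_X"

definition QQ :: "nat \<Rightarrow> (nat \<Rightarrow> complex) \<Rightarrow> nat \<Rightarrow> complex fps" where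
  "QQ n s i = (\<Prod>j\<in>{1..i}. (1 - uu s j)) * (\<Prod>j\<in>{i<..n}. (1 + uu s j))"

definition PP :: "nat \<Rightarrow> (nat \<Rightarrow> complex) \<Rightarrow> nat \<Rightarrow> complex fps" where
  "PP n s k = (\<Prod>j\<in>{1..<k}. (1 - uu s j)) * (\<Prod>j\<in>{k<..n}. (1 + uu s j))"

lemma QQ_prev: "c \<in> {1..n} \<Longrightarrow> QQ n s (c - 1) = (1 + uu s c) * PP n s c"
proof -
  assume c: "c \<in> {1..n}"
  have e1: "{1..c-1} = {1..<c}" using c by auto
  have e2: "{c-1<..n} = insert c {c<..n}" using c by auto
  show ?thesis unfolding QQ_def PP_def e1 e2 by (simp add: mult_ac)
qed

lemma QQ_cur: "c \<in> {1..n} \<Longrightarrow> QQ n s c = (1 - uu s c) * PP n s c"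
proof -
  assume c: "c \<in> {1..n}"
  have e1: "{1..c} = insert c {1..<c}" using c by auto
  show ?thesis unfolding QQ_def PP_def e1 by (simp add: mult_ac)
qed

lemma QQ_diff: "c \<in> {1..n} \<Longrightarrow> QQ n s (c - 1) - QQ n s c = fps_X * fps_const (2 * s c) * PP n s c"
proof -
  assume c: "c \<in> {1..n}"
  have "QQ n s (c - 1) - QQ n s c = 2 * uu s c * PP n s c"
    unfolding QQ_prev[OF c] QQ_cur[OF c] by (simp add: algebra_simps)
  also have "\<dots> = fps_X * fps_const (2 * s c) * PP n s c"
    unfolding uu_def by (simp add: fps_numeral_fps_const mult_ac)
  finally show ?thesis .
qed

lemma tele_a: "k \<le> (n::nat) \<Longrightarrow> (\<Sum>c\<in>{k<..n}. F (c - 1) - F c) = F k - (F n :: 'a::ab_group_add)"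
proof (induction n)
  case 0 then show ?case by simp
next
  case (Suc n)
  show ?case
  proof (cases "k = Suc n")
    case True then show ?thesis by simp
  next
    case False
    then have "k \<le> n" using Suc.prems by simp
    moreover have "{k<..Suc n} = insert (Suc n) {k<..n}" using \<open>k \<le> n\<close> by auto
    ultimately show ?thesis using Suc.IH by simp
  qed
qed

lemma tele_b: "(\<Sum>a\<in>{1..<Suc (k::nat)}. F (a - 1) - F a) = F 0 - (F k :: 'a::ab_group_add)"
  by (induction k) (simp_all add: atLeastLessThanSuc)

lemma QQ0: "QQ n s 0 = (\<Prod>j\<in>{1..n}. (1 + uu s j))"
proof -
  have "{0<..n} = {1..n}" by auto
  then show ?thesis unfolding QQ_def by simp
qed

lemma QQn: "QQ n s n = (\<Prod>j\<in>{1..n}. (1 - uu s j))"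
  unfolding QQ_def by simp

lemma prod_nth0: "finite S \<Longrightarrow> (\<Prod>j\<in>S. (1 + fps_const (c j) * fps_X :: complex fps)) $ 0 = 1"
  by (induction S rule: finite_induct) simp_all

lemma prod_nth0': "finite S \<Longrightarrow> (\<Prod>j\<in>S. (1 - fps_const (c j) * fps_X :: complex fps)) $ 0 = 1"
  by (induction S rule: finite_induct) simp_all


definition EE where "EE n s = QQ n s 0 + QQ n s n"
definition bf where "bf n s k = fps_const 2 * PP n s k * inverse (EE n s)"
definition HH where "HH n s = fps_X * (\<Sum>k\<in>{1..n}. fps_const (s k) * bf n s k)"

lemma EE0: "EE n s $ 0 = 2"
  unfolding EE_def QQ0 QQn uu_def using prod_nth0[of "{1..n}" s] prod_nth0'[of "{1..n}" s] by simp

lemma EE_inv: "EE n s * inverse (EE n s) = 1"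
  using EE0[of n s] by (intro inverse_mult_eq_1') simp

lemma EE_inv': "inverse (EE n s) * EE n s = 1"
  using EE_inv[of n s] by (simp add: mult.commute)

lemma key: "c \<in> {1..n} \<Longrightarrow> fps_X * (fps_const (s c) * bf n s c) = (QQ n s (c - 1) - QQ n s c) * inverse (EE n s)"
proof -
  assume c: "c \<in> {1..n}"
  have "fps_X * (fps_const (s c) * bf n s c) = fps_X * fps_const (2 * s c) * PP n s c * inverse (EE n s)"
    unfolding bf_def by (simp add: mult_ac)
  then show ?thesis unfolding QQ_diff[OF c] by simp
qed

lemma bf_rec:
  assumes k: "k \<in> {1..n}"
  shows "bf n s k = 1 + fps_X * ((\<Sum>c\<in>{k<..n}. fps_const (s c) * bf n s c) - (\<Sum>a\<in>{1..<k}. fps_const (s a) * bf n s a))"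
proof -
  define Ei where "Ei = inverse (EE n s)"
  have s1: "fps_X * (\<Sum>c\<in>{k<..n}. fps_const (s c) * bf n s c) = (QQ n s k - QQ n s n) * Ei"
  proof -
    have "fps_X * (\<Sum>c\<in>{k<..n}. fps_const (s c) * bf n s c) = (\<Sum>c\<in>{k<..n}. (QQ n s (c - 1) - QQ n s c) * Ei)"
      unfolding sum_distrib_left Ei_def by (rule sum.cong[OF refl], rule key) (use k in auto)
    also have "\<dots> = (QQ n s k - QQ n s n) * Ei"
      unfolding sum_distrib_right[symmetric] using k tele_a[of k n "QQ n s"] by simp
    finally show ?thesis .
  qed
  obtain k' where kk: "k = Suc k'" using k by (cases k) auto
  have s2: "fps_X * (\<Sum>a\<in>{1..<k}. fps_const (s a) * bf n s a) = (QQ n s 0 - QQ n s (k - 1)) * Ei"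
  proof -
    have "fps_X * (\<Sum>a\<in>{1..<k}. fps_const (s a) * bf n s a) = (\<Sum>a\<in>{1..<k}. (QQ n s (a - 1) - QQ n s a) * Ei)"
      unfolding sum_distrib_left Ei_def by (rule sum.cong[OF refl], rule key) (use k in auto)
    also have "\<dots> = (QQ n s 0 - QQ n s (k - 1)) * Ei"
      unfolding sum_distrib_right[symmetric] kk tele_b by simp
    finally show ?thesis .
  qed
  have one: "1 = (QQ n s 0 + QQ n s n) * Ei" using EE_inv[of n s] unfolding Ei_def EE_def by simp
  have "1 + fps_X * ((\<Sum>c\<in>{k<..n}. fps_const (s c) * bf n s c) - (\<Sum>a\<in>{1..<k}. fps_const (s a) * bf n s a))
      = (QQ n s (k - 1) + QQ n s k) * Ei"
    unfolding right_diff_distrib s1 s2 by (subst one) (simp add: algebra_simps)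
  also have "\<dots> = bf n s k"
    unfolding QQ_prev[OF k] QQ_cur[OF k] bf_def Ei_def by (simp add: fps_numeral_fps_const[symmetric] algebra_simps)
  finally show ?thesis by simp
qed

lemma bf_coeff: "\<forall>k\<in>{1..n}. bf n s k $ m = (Lmap n s ^^ m) (\<lambda>_. 1) k"
proof (induction m)
  case 0
  show ?case
  proof
    fix k assume k: "k \<in> {1..n}"
    show "bf n s k $ 0 = (Lmap n s ^^ 0) (\<lambda>_. 1) k" by (subst bf_rec[OF k]) simp
  qed
next
  case (Suc m)
  show ?case
  proof
    fix k assume k: "k \<in> {1..n}"
    have "bf n s k $ Suc m = (\<Sum>c\<in>{k<..n}. s c * bf n s c $ m) - (\<Sum>a\<in>{1..<k}. s a * bf n s a $ m)"
      by (subst bf_rec[OF k]) (simp add: fps_sum_nth)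
    also have "\<dots> = (\<Sum>c\<in>{k<..n}. s c * (Lmap n s ^^ m) (\<lambda>_. 1) c) - (\<Sum>a\<in>{1..<k}. s a * (Lmap n s ^^ m) (\<lambda>_. 1) a)"
      using Suc.IH k by (intro arg_cong2[where f="(-)"] sum.cong) auto
    also have "\<dots> = (Lmap n s ^^ Suc m) (\<lambda>_. 1) k" by (simp add: Lmap_def)
    finally show "bf n s k $ Suc m = (Lmap n s ^^ Suc m) (\<lambda>_. 1) k" .
  qed
qed

lemma HH_coeff: "HH n s $ (2 * i + 1) = chi0 n s i"
  unfolding HH_def chi0_def using bf_coeff[of n s "2*i"] by (simp add: fps_sum_nth)

lemma HH_eq: "HH n s * EE n s = QQ n s 0 - QQ n s n"
proof -
  have "HH n s * EE n s = (\<Sum>k\<in>{1..n}. fps_X * (fps_const (s k) * bf n s k)) * EE n s"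
    unfolding HH_def sum_distrib_left by simp
  also have "\<dots> = (\<Sum>k\<in>{1..n}. (QQ n s (k - 1) - QQ n s k) * inverse (EE n s)) * EE n s"
    by (intro arg_cong2[where f="(*)"] sum.cong refl key) auto
  also have "\<dots> = (\<Sum>k\<in>{1..n}. (QQ n s (k - 1) - QQ n s k))"
    unfolding sum_distrib_right[symmetric] using EE_inv'[of n s] by (simp add: mult.assoc)
  also have "\<dots> = QQ n s 0 - QQ n s n"
  proof -
    have "{0<..n} = {1..n}" by auto
    then show ?thesis using tele_a[of 0 n "QQ n s"] by simp
  qed
  finally show ?thesis .
qed






lemma factor: "poly P 0 = (1::complex) \<Longrightarrow> \<exists>(n::nat) s. P = (\<Prod>j\<in>{1..n}. [:1, s j:])"
proof (induction "degree P" arbitrary: P rule: less_induct)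
  case less
  show ?case
  proof (cases "degree P = 0")
    case True
    then have "P = [:coeff P 0:]" by (rule degree_0_id[symmetric])
    moreover have "coeff P 0 = 1" using less.prems by (simp add: poly_0_coeff_0)
    ultimately have "P = 1" by (simp add: one_pCons)
    then show ?thesis
      apply (rule_tac x="0::nat" in exI)
      apply (rule_tac x="\<lambda>_::nat. 0::complex" in exI)
      by simp
  next
    case False
    then have "\<not> constant (poly P)" by (simp add: constant_degree)
    then obtain z where z: "poly P z = 0" using fundamental_theorem_of_algebra by blast
    then obtain Q where PQ: "P = [:-z, 1:] * Q" using poly_eq_0_iff_dvd by (metis dvdE)
    have "poly P 0 = - z * poly Q 0" unfolding PQ by simp
    then have zQ: "- z * poly Q 0 = 1" using less.prems by simp
    then have z0: "z \<noteq> 0" by auto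
    define Q' where "Q' = smult (-z) Q"
    have PQ': "P = [:1, -1/z:] * Q'"
      unfolding PQ Q'_def using z0 by (simp add: mult_smult_right[symmetric] del: mult_smult_right) 
    have Q0: "Q \<noteq> 0" using zQ by auto
    have "degree P = degree Q + 1" unfolding PQ using Q0 by (subst degree_mult_eq) auto
    then have dQ: "degree Q' < degree P" unfolding Q'_def using z0 by simp
    have "poly Q' 0 = 1" unfolding Q'_def using zQ by simp
    then obtain m :: nat and s where m: "Q' = (\<Prod>j\<in>{1..m}. [:1, s j:])" using less.hyps[OF dQ] by blast
    define s' where "s' = s(Suc m := -1/z)"
    have "(\<Prod>j\<in>{1..Suc m}. [:1, s' j:]) = [:1, -1/z:] * (\<Prod>j\<in>{1..m}. [:1, s' j:])"
      by (simp add: s'_def)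
    also have "(\<Prod>j\<in>{1..m}. [:1, s' j:]) = Q'" unfolding m s'_def by (rule prod.cong) auto
    finally show ?thesis using PQ' by metis
  qed
qed


definition altf :: "complex fps \<Rightarrow> complex fps" where
  "altf f = Abs_fps (\<lambda>k. (-1)^k * f $ k)"

lemma altf_nth[simp]: "altf f $ k = (-1)^k * f $ k"
  unfolding altf_def by simp

lemma altf_mult: "altf (f * g) = altf f * altf g"
proof (rule fps_ext)
  fix k
  have "altf (f * g) $ k = (\<Sum>i=0..k. (-1)^k * (f $ i * g $ (k - i)))"
    by (simp add: fps_mult_nth sum_distrib_left)
  also have "\<dots> = (\<Sum>i=0..k. ((-1)^i * f $ i) * ((-1)^(k - i) * g $ (k - i)))"
  proof (rule sum.cong[OF refl])
    fix i assume "i \<in> {0..k}"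
    then have "(-1::complex)^k = (-1)^i * (-1)^(k-i)" by (simp add: power_add[symmetric])
    then show "(-1)^k * (f $ i * g $ (k - i)) = ((-1)^i * f $ i) * ((-1)^(k - i) * g $ (k - i))"
      by (simp add: mult_ac)
  qed
  also have "\<dots> = (altf f * altf g) $ k" by (simp add: fps_mult_nth)
  finally show "altf (f * g) $ k = (altf f * altf g) $ k" .
qed

lemma altf_one[simp]: "altf 1 = 1"
  by (rule fps_ext) simp

lemma altf_prod: "finite S \<Longrightarrow> altf (\<Prod>j\<in>S. f j) = (\<Prod>j\<in>S. altf (f j))"
  by (induction S rule: finite_induct) (simp_all add: altf_mult)

lemma altf_lin: "altf (1 + uu s j) = 1 - uu s j"
proof (rule fps_ext)
  fix k show "altf (1 + uu s j) $ k = (1 - uu s j) $ k"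
    by (cases k; cases "k = 1") (auto simp: uu_def fps_X_nth)
qed

lemma QQn_alt: "QQ n s n = altf (QQ n s 0)"
  unfolding QQ0 QQn by (simp add: altf_prod altf_lin)

lemma even_coeffs:
  fixes Hf Cf Af :: "complex fps"
  assumes HC: "Hf * Cf = Af" and C0: "Cf $ 0 = 1" and Codd: "\<And>k. odd k \<Longrightarrow> Cf $ k = 0"
    and Aev: "\<And>k. even k \<Longrightarrow> Af $ k = 0"
  shows "even k \<Longrightarrow> Hf $ k = 0"
proof (induction k rule: less_induct)
  case (less k)
  have e: "{0..k} = insert k {0..<k}" by auto
  have z: "(\<Sum>i\<in>{0..<k}. Hf $ i * Cf $ (k - i)) = 0"
  proof (rule sum.neutral, rule ballI)
    fix i assume i: "i \<in> {0..<k}"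
    show "Hf $ i * Cf $ (k - i) = 0"
    proof (cases "even i")
      case True then show ?thesis using less.IH[of i] i by simp
    next
      case False
      then have "odd (k - i)" using less.prems i by simp
      then show ?thesis using Codd by simp
    qed
  qed
  have "Af $ k = Hf $ k" unfolding HC[symmetric] fps_mult_nth e using z C0 by simp
  then show ?case using Aev less.prems by simp
qed


theorem proposition5p7:
  fixes p q :: nat and a c :: "nat \<Rightarrow> complex"
  shows "\<exists>(n::nat) (s::nat \<Rightarrow> complex) (\<chi>::nat \<Rightarrow> complex).
     (\<forall>(sc::complex \<Rightarrow> 'v::ab_group_add \<Rightarrow> 'v) M M0 M1 Xi.
        simple_graded_hmod sc M M0 M1 n Xi s \<longrightarrow>
        (\<forall>i. \<forall>v\<in>M. Zop sc n Xi i v = sc (\<chi> i) v)) \<and>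
     Abs_fps (\<lambda>k. if odd k then \<chi> (k div 2) else 0) =
       Abs_fps (\<lambda>k. if odd k \<and> k div 2 \<le> p then a (k div 2) else 0) /
       Abs_fps (\<lambda>k. if k = 0 then 1 else if even k \<and> k div 2 \<le> q then c (k div 2) else 0)"
proof -
  define e where "e k = (if k = 0 then 1 else if odd k then (if k div 2 \<le> p then a (k div 2) else 0)
      else (if k div 2 \<le> q then c (k div 2) else 0))" for k
  define N where "N = 2 * p + 2 * q + 2"
  define Pp where "Pp = (\<Sum>k\<le>N. monom (e k) k)"
  have ce: "coeff Pp k = e k" for k
  proof (cases "k \<le> N")
    case True then show ?thesis unfolding Pp_def by (simp add: coeff_sum)
  next
    case False
    then have "e k = 0" unfolding e_def N_def by auto
    then show ?thesis unfolding Pp_def using False by (simp add: coeff_sum)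
  qed
  have "poly Pp 0 = 1" using ce[of 0] by (simp add: poly_0_coeff_0 e_def)
  then obtain n :: nat and s where Pps: "Pp = (\<Prod>j\<in>{1..n}. [:1, s j:])" using factor by blast
  have Q0: "QQ n s 0 $ k = e k" for k
  proof -
    have "QQ n s 0 = fps_of_poly Pp" unfolding QQ0 Pps fps_of_poly_prod
      by (rule prod.cong) (auto simp: uu_def fps_of_poly_pCons)
    then show ?thesis using ce by simp
  qed
  have Qn: "QQ n s n $ k = (-1)^k * e k" for k
    using Q0 by (simp add: QQn_alt)
  define Af where "Af = Abs_fps (\<lambda>k. if odd k \<and> k div 2 \<le> p then a (k div 2) else 0)"
  define Cf where "Cf = Abs_fps (\<lambda>k. if k = 0 then 1 else if even k \<and> k div 2 \<le> q then c (k div 2) else (0::complex))"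
  have EEC: "EE n s = fps_const 2 * Cf"
    by (rule fps_ext) (auto simp: EE_def Cf_def Q0 Qn e_def)
  have QQA: "QQ n s 0 - QQ n s n = fps_const 2 * Af"
    by (rule fps_ext) (auto simp: Af_def Q0 Qn e_def)
  have "fps_const 2 * (HH n s * Cf) = fps_const 2 * Af"
    using HH_eq[of n s] unfolding EEC QQA by (simp add: mult_ac)
  then have HCA: "HH n s * Cf = Af" by simp
  have C0: "Cf $ 0 = 1" unfolding Cf_def by simp
  have div: "Af / Cf = HH n s"
    using C0 by (simp add: fps_divide_unit HCA[symmetric] mult.assoc inverse_mult_eq_1')
  have Heven: "even k \<Longrightarrow> HH n s $ k = 0" for k
    by (rule even_coeffs[OF HCA C0]) (auto simp: Cf_def Af_def intro: odd_pos)
  have final: "Abs_fps (\<lambda>k. if odd k then chi0 n s (k div 2) else 0) = Af / Cf"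
  proof (rule fps_ext)
    fix k
    show "Abs_fps (\<lambda>k. if odd k then chi0 n s (k div 2) else 0) $ k = (Af / Cf) $ k"
    proof (cases "odd k")
      case True
      then have "k = 2 * (k div 2) + 1" by presburger
      then have "HH n s $ k = chi0 n s (k div 2)" using HH_coeff by metis
      then show ?thesis using True div by simp
    next
      case False then show ?thesis using Heven div by simp
    qed
  qed
  have first: "\<forall>(sc::complex \<Rightarrow> 'v::ab_group_add \<Rightarrow> 'v) M M0 M1 Xi.
        simple_graded_hmod sc M M0 M1 n Xi s \<longrightarrow>
        (\<forall>i. \<forall>v\<in>M. Zop sc n Xi i v = sc (chi0 n s i) v)"
    using hm.Zop_eq[OF hm.intro] by blast
  show ?thesis using first final unfolding Af_def Cf_def by blast
qed


end
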